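(* Let $G=(V,E)$ be a finite, simple, undirected, connected graph with no isolated vertices that has at least one split independent set. Then $\beta_s(G)\le \Gamma_s(G)$ and $\gamma_s(G)\le i_s(G)$.
   Context: For $X\subseteq V$, $\langle X\rangle$ denotes the induced subgraph on $X$. A set $D\subseteq V$ is dominating if every vertex of $V\setminus D$ has a neighbor in $D$. A dominating set $S$ is a split dominating set if $\langle V\setminus S\rangle$ is disconnected or a $K_1$. A split dominating set $S$ is a minimal split dominating set if for every $u\in S$ the set $S\setminus\{u\}$ is not a split dominating set. A set $S$ is a split independent set if $S$ is independent and $\langle V\setminus S\rangle$ is disconnected or a $K_1$; it is a maximal split independent set if for every $v\in V\setminus S$, either $S\cup\{v\}$ is not independent or $\langle V\setminus (S\cup\{v\})\rangle$ is connected. Parameters: $\gamma_s(G)=\min\{|S|: S\text{ split dominating}\}$; $\Gamma_s(G)=\max\{|S|: S\text{ minimal split dominating}\}$; $i_s(G)=\min\{|S|: S\text{ maximal split independent}\}$; $\beta_s(G)=\max\{|S|: S\text{ maximal split independent}\}$. *)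

theory Defs
  imports Main
begin

definition simple_graph :: "'a set \<Rightarrow> ('a \<Rightarrow> 'a \<Rightarrow> bool) \<Rightarrow> bool" where
  "simple_graph V E \<longleftrightarrow> finite V \<and> (\<forall>u v. E u v \<longrightarrow> u \<in> V \<and> v \<in> V)
     \<and> (\<forall>u v. E u v \<longrightarrow> E v u) \<and> (\<forall>u. \<not> E u u)"

definition induced_connected :: "('a \<Rightarrow> 'a \<Rightarrow> bool) \<Rightarrow> 'a set \<Rightarrow> bool" where
  "induced_connected E X \<longleftrightarrow>
     (\<forall>u\<in>X. \<forall>v\<in>X. (\<lambda>x y. E x y \<and> x \<in> X \<and> y \<in> X)\<^sup>*\<^sup>* u v)"

definition disconnected_or_K1 :: "('a \<Rightarrow> 'a \<Rightarrow> bool) \<Rightarrow> 'a set \<Rightarrow> bool" where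
  "disconnected_or_K1 E X \<longleftrightarrow> card X = 1 \<or> (X \<noteq> {} \<and> \<not> induced_connected E X)"

definition no_isolated :: "'a set \<Rightarrow> ('a \<Rightarrow> 'a \<Rightarrow> bool) \<Rightarrow> bool" where
  "no_isolated V E \<longleftrightarrow> (\<forall>v\<in>V. \<exists>u. E v u)"

definition dominating :: "'a set \<Rightarrow> ('a \<Rightarrow> 'a \<Rightarrow> bool) \<Rightarrow> 'a set \<Rightarrow> bool" where
  "dominating V E D \<longleftrightarrow> D \<subseteq> V \<and> (\<forall>v\<in>V - D. \<exists>u\<in>D. E v u)"

definition split_dominating :: "'a set \<Rightarrow> ('a \<Rightarrow> 'a \<Rightarrow> bool) \<Rightarrow> 'a set \<Rightarrow> bool" where
  "split_dominating V E S \<longleftrightarrow> dominating V E S \<and> disconnected_or_K1 E (V - S)"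

definition minimal_split_dominating :: "'a set \<Rightarrow> ('a \<Rightarrow> 'a \<Rightarrow> bool) \<Rightarrow> 'a set \<Rightarrow> bool" where
  "minimal_split_dominating V E S \<longleftrightarrow>
     split_dominating V E S \<and> (\<forall>u\<in>S. \<not> split_dominating V E (S - {u}))"

definition independent :: "('a \<Rightarrow> 'a \<Rightarrow> bool) \<Rightarrow> 'a set \<Rightarrow> bool" where
  "independent E S \<longleftrightarrow> (\<forall>u\<in>S. \<forall>v\<in>S. \<not> E u v)"

definition split_independent :: "'a set \<Rightarrow> ('a \<Rightarrow> 'a \<Rightarrow> bool) \<Rightarrow> 'a set \<Rightarrow> bool" where
  "split_independent V E S \<longleftrightarrow> S \<subseteq> V \<and> independent E S \<and> disconnected_or_K1 E (V - S)"

definition maximal_split_independent :: "'a set \<Rightarrow> ('a \<Rightarrow> 'a \<Rightarrow> bool) \<Rightarrow> 'a set \<Rightarrow> bool" where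
  "maximal_split_independent V E S \<longleftrightarrow> split_independent V E S \<and>
     (\<forall>v\<in>V - S. \<not> independent E (insert v S) \<or> induced_connected E (V - insert v S))"

definition gamma_s :: "'a set \<Rightarrow> ('a \<Rightarrow> 'a \<Rightarrow> bool) \<Rightarrow> nat" where
  "gamma_s V E = Min (card ` {S. split_dominating V E S})"

definition Gamma_s :: "'a set \<Rightarrow> ('a \<Rightarrow> 'a \<Rightarrow> bool) \<Rightarrow> nat" where
  "Gamma_s V E = Max (card ` {S. minimal_split_dominating V E S})"

definition i_s :: "'a set \<Rightarrow> ('a \<Rightarrow> 'a \<Rightarrow> bool) \<Rightarrow> nat" where
  "i_s V E = Min (card ` {S. maximal_split_independent V E S})"

definition beta_s :: "'a set \<Rightarrow> ('a \<Rightarrow> 'a \<Rightarrow> bool) \<Rightarrow> nat" where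
  "beta_s V E = Max (card ` {S. maximal_split_independent V E S})"

end

theory Submission
  imports Defs
begin

lemma rt_lift:
  assumes "(\<lambda>x y. E x y \<and> x \<in> X \<and> y \<in> X)\<^sup>*\<^sup>* a b" "X \<subseteq> Y"
  shows "(\<lambda>x y. E x y \<and> x \<in> Y \<and> y \<in> Y)\<^sup>*\<^sup>* a b"
proof -
  have "(\<lambda>x y. E x y \<and> x \<in> X \<and> y \<in> X) \<le> (\<lambda>x y. E x y \<and> x \<in> Y \<and> y \<in> Y)"
    using assms(2) by auto
  from rtranclp_mono[OF this] assms(1) show ?thesis by blast
qed

lemma msis_dom:
  assumes g: "simple_graph V E" and ni: "no_isolated V E"
    and m: "maximal_split_independent V E S"
  shows "dominating V E S"
proof -
  have sub: "S \<subseteq> V" and ind: "independent E S" and dk: "disconnected_or_K1 E (V - S)"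
    using m unfolding maximal_split_independent_def split_independent_def by auto
  have max: "\<And>v. v \<in> V - S \<Longrightarrow> \<not> independent E (insert v S) \<or> induced_connected E (V - insert v S)"
    using m unfolding maximal_split_independent_def by auto
  show ?thesis unfolding dominating_def
  proof (intro conjI sub ballI, rule ccontr)
    fix v assume v: "v \<in> V - S" and nd: "\<not> (\<exists>u\<in>S. E v u)"
    have sym: "\<And>a b. E a b \<Longrightarrow> E b a" and irr: "\<And>a. \<not> E a a"
      and inV: "\<And>a b. E a b \<Longrightarrow> a \<in> V \<and> b \<in> V"
      using g unfolding simple_graph_def by auto
    obtain u where vu: "E v u" using ni v unfolding no_isolated_def by auto
    have "u \<in> V" using inV[OF vu] by blast
    moreover have "u \<notin> S" using vu nd by blast
    moreover have "u \<noteq> v" using vu irr by blast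
    ultimately have u: "u \<in> V - S - {v}" by blast
    have "independent E (insert v S)" unfolding independent_def
    proof (intro ballI)
      fix a b assume a: "a \<in> insert v S" and b: "b \<in> insert v S"
      show "\<not> E a b"
      proof
        assume ab: "E a b"
        have "E b a" using sym[OF ab] .
        show False
        proof (cases "a = v")
          case True
          then show False using ab b nd irr by blast
        next
          case False
          then have "a \<in> S" using a by blast
          show False
          proof (cases "b = v")
            case True then show False using \<open>E b a\<close> \<open>a \<in> S\<close> nd by blast
          next
            case False then have "b \<in> S" using b by blast
            then show False using ind \<open>a \<in> S\<close> ab unfolding independent_def by blast
          qed
        qed
      qed
    qed
    hence c0: "induced_connected E (V - insert v S)" using max[OF v] by blast
    have "V - insert v S = V - S - {v}" by blast
    with c0 have conn: "induced_connected E (V - S - {v})" by (simp only:)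
    have "induced_connected E (V - S)"
      unfolding induced_connected_def
    proof (intro ballI)
      fix x y assume x: "x \<in> V - S" and y: "y \<in> V - S"
      let ?R = "\<lambda>a b. E a b \<and> a \<in> V - S \<and> b \<in> V - S"
      have P: "?R\<^sup>*\<^sup>* a b" if "a \<in> V - S - {v}" "b \<in> V - S - {v}" for a b
      proof -
        have "(\<lambda>x y. E x y \<and> x \<in> V - S - {v} \<and> y \<in> V - S - {v})\<^sup>*\<^sup>* a b"
          using conn that unfolding induced_connected_def by blast
        thus ?thesis by (rule rt_lift) auto
      qed
      have e1: "?R v u" "?R u v" using vu sym u v by auto
      show "?R\<^sup>*\<^sup>* x y"
      proof (cases "x = v")
        case True
        show ?thesis
        proof (cases "y = v")
          case True
          have "?R\<^sup>*\<^sup>* x x" by (rule rtranclp.rtrancl_refl)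
          thus ?thesis using \<open>x = v\<close> True by (simp only:)
        next
          case False
          hence "y \<in> V - S - {v}" using y by blast
          hence "?R\<^sup>*\<^sup>* u y" by (rule P[OF u])
          hence "?R\<^sup>*\<^sup>* v y" by (rule converse_rtranclp_into_rtranclp[of ?R, OF e1(1)])
          thus ?thesis using \<open>x = v\<close> by (simp only:)
        qed
      next
        case False
        show ?thesis
        proof (cases "y = v")
          case True
          have "x \<in> V - S - {v}" using x \<open>x \<noteq> v\<close> by blast
          hence "?R\<^sup>*\<^sup>* x u" using P u by blast
          hence "?R\<^sup>*\<^sup>* x v" by (rule rtranclp.rtrancl_into_rtrancl[of ?R, OF _ e1(2)])
          thus ?thesis using True by (simp only:)
        next
          case False
          have "x \<in> V - S - {v}" "y \<in> V - S - {v}" using x y \<open>x \<noteq> v\<close> False by blast+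
          thus ?thesis by (rule P)
        qed
      qed
    qed
    hence "card (V - S) = 1" using dk unfolding disconnected_or_K1_def by blast
    then obtain w where "V - S = {w}" by (meson card_1_singletonE)
    thus False using u v by (metis Diff_iff singletonD insertI1)
  qed
qed

lemma msis_msd:
  assumes g: "simple_graph V E" and ni: "no_isolated V E"
    and m: "maximal_split_independent V E S"
  shows "minimal_split_dominating V E S"
proof -
  have d: "dominating V E S" using msis_dom[OF g ni m] .
  have ind: "independent E S" and dk: "disconnected_or_K1 E (V - S)" and sub: "S \<subseteq> V"
    using m unfolding maximal_split_independent_def split_independent_def by auto
  have "\<And>u. u \<in> S \<Longrightarrow> \<not> dominating V E (S - {u})"
    using ind sub unfolding dominating_def independent_def by blast
  thus ?thesis using d dk unfolding minimal_split_dominating_def split_dominating_def by auto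
qed

lemma msis_exists:
  assumes g: "simple_graph V E" and ex: "\<exists>S. split_independent V E S"
  shows "\<exists>S. maximal_split_independent V E S"
proof -
  have fin: "finite V" using g unfolding simple_graph_def by auto
  let ?A = "{S. split_independent V E S}"
  have finA: "finite (card ` ?A)"
    by (rule finite_subset[of _ "card ` Pow V"]) (use fin in \<open>auto simp: split_independent_def\<close>)
  obtain S where S: "S \<in> ?A" using ex by auto
  let ?m = "Max (card ` ?A)"
  have "?m \<in> card ` ?A" using finA S by (intro Max_in) auto
  then obtain T where T: "split_independent V E T" "card T = ?m" by auto
  have "maximal_split_independent V E T"
    unfolding maximal_split_independent_def
  proof (intro conjI T(1) ballI)
    fix v assume v: "v \<in> V - T"
    show "\<not> independent E (insert v T) \<or> induced_connected E (V - insert v T)"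
    proof (rule ccontr)
      assume a: "\<not> ?thesis"
      hence ne: "V - insert v T \<noteq> {}" unfolding induced_connected_def by auto
      have "split_independent V E (insert v T)"
        using a ne v T(1) unfolding split_independent_def disconnected_or_K1_def by auto
      hence "card (insert v T) \<le> ?m" using finA by auto
      moreover have "finite T" using T(1) fin finite_subset unfolding split_independent_def by blast
      ultimately show False using v T(2) by simp
    qed
  qed
  thus ?thesis by blast
qed

theorem mainTheorem3:
  fixes V :: "'a set" and E :: "'a \<Rightarrow> 'a \<Rightarrow> bool"
  assumes "simple_graph V E"
    and "V \<noteq> {}"
    and "induced_connected E V"
    and "no_isolated V E"
    and "\<exists>S. split_independent V E S"
  shows "beta_s V E \<le> Gamma_s V E \<and> gamma_s V E \<le> i_s V E"
proof -
  have fin: "finite V" using assms(1) unfolding simple_graph_def by auto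
  have finP: "finite (card ` Pow V)" using fin by auto
  obtain S0 where S0: "maximal_split_independent V E S0" using msis_exists[OF assms(1,5)] by blast
  let ?I = "{S. maximal_split_independent V E S}"
  let ?M = "{S. minimal_split_dominating V E S}"
  let ?D = "{S. split_dominating V E S}"
  have IM: "?I \<subseteq> ?M" using msis_msd[OF assms(1,4)] by auto
  have MD: "?M \<subseteq> ?D" unfolding minimal_split_dominating_def by auto
  have DV: "card ` ?D \<subseteq> card ` Pow V" unfolding split_dominating_def dominating_def by auto
  have finD: "finite (card ` ?D)" using finite_subset[OF DV finP] .
  have finM: "finite (card ` ?M)" using finD MD by (meson finite_subset image_mono)
  have neI: "card ` ?I \<noteq> {}" using S0 by auto
  have finI: "finite (card ` ?I)" using finM IM by (meson finite_subset image_mono)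
  have "beta_s V E \<le> Gamma_s V E" unfolding beta_s_def Gamma_s_def
    using Max_mono[OF image_mono[OF IM] neI finM] .
  moreover have "gamma_s V E \<le> i_s V E" unfolding gamma_s_def i_s_def
    using Min_antimono[OF image_mono[OF subset_trans[OF IM MD]] neI finD] .
  ultimately show ?thesis by simp
qed

end
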